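(* Let $E,J,R,Q\in\mathbb{R}^{n\times n}$ with $J=-J^T$, $R=R^T\ge0$, $Q^TE=E^TQ\ge0$ and $\ker Q\subseteq\ker E$. Then: (a) If the pencil $sE-Q$ is regular, then $Q$ is invertible. (b) If $Q$ is invertible, then $[E,(J-R)Q]$ is stable if and only if $\ker J\cap\ker R\cap(Q\ker E)=\{0\}$.
   Context: A pencil $sE-A$ is regular if $\det(sE-A)$ is not the zero polynomial. For $E,A\in\mathbb{R}^{n\times n}$, $[E,A]$ is stable if every $x\in C^\infty(\mathbb{R},\mathbb{R}^n)$ with $\tfrac{d}{dt}Ex=Ax$ is bounded on $[0,\infty)$. $Q\ker E=\{Qx: Ex=0\}$. *)

theory Defs
  imports "HOL-Analysis.Analysis"
begin

text \<open>Regularity of the pencil sE - A: the determinant det(sE - A), as a function of s,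
  is not identically zero (equivalently, not the zero polynomial, since it is a polynomial in s).\<close>
definition regular_pencil :: "real^'n^'n \<Rightarrow> real^'n^'n \<Rightarrow> bool" where
  "regular_pencil E A \<longleftrightarrow> (\<lambda>s::real. det (s *\<^sub>R E - A)) \<noteq> (\<lambda>s. 0)"

text \<open>C-infinity functions R -> R^n: there is a sequence of successive derivatives.\<close>
definition smooth_fun :: "(real \<Rightarrow> real^'n) \<Rightarrow> bool" where
  "smooth_fun x \<longleftrightarrow> (\<exists>D :: nat \<Rightarrow> real \<Rightarrow> real^'n. D 0 = x \<and>
      (\<forall>k t. (D k has_vector_derivative D (Suc k) t) (at t)))"

text \<open>[E,A] is stable: every smooth solution of d/dt (E x) = A x is bounded on [0,\<infinity>).\<close>
definition stable_DAE :: "real^'n^'n \<Rightarrow> real^'n^'n \<Rightarrow> bool" where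
  "stable_DAE E A \<longleftrightarrow> (\<forall>x. smooth_fun x \<longrightarrow>
      (\<forall>t. ((\<lambda>t. E *v x t) has_vector_derivative (A *v x t)) (at t)) \<longrightarrow>
      bounded (x ` {0..}))"

definition psd :: "real^'n^'n \<Rightarrow> bool" where
  "psd M \<longleftrightarrow> (\<forall>v. 0 \<le> v \<bullet> (M *v v))"

definition mat_ker :: "real^'n^'n \<Rightarrow> (real^'n) set" where
  "mat_ker M = {v. M *v v = 0}"

end

theory Submission imports Defs begin

lemma inner_transpose: "(x::real^'n) \<bullet> (A *v y) = (transpose A *v x) \<bullet> y"
  by (metis dot_lmul_matrix vector_transpose_matrix transpose_transpose)

lemma sym_inner:
  fixes S :: "real^'n^'n"
  assumes "transpose S = S"
  shows "v \<bullet> (S *v u) = u \<bullet> (S *v v)"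
  by (metis assms inner_commute inner_transpose)

lemma skew_zero:
  fixes J :: "real^'n^'n"
  assumes "J = - transpose J"
  shows "w \<bullet> (J *v w) = 0"
proof -
  have tj: "transpose J = - J" proof -
    have "transpose (- transpose J) = - J" by (simp add: transpose_def vec_eq_iff)
    then show ?thesis using assms by metis
  qed
  have "w \<bullet> (J *v w) = (transpose J *v w) \<bullet> w" by (rule inner_transpose)
  also have "\<dots> = - ((J *v w) \<bullet> w)" proof -
    have "(- J) *v w = - (J *v w)" by (simp add: matrix_vector_mult_def sum_negf vec_eq_iff)
    then show ?thesis by (simp add: tj)
  qed
  finally show ?thesis by (simp add: inner_commute)
qed

lemma psd_CS:
  fixes S :: "real^'n^'n"
  assumes sym: "transpose S = S" and p: "psd S"
  shows "(u \<bullet> (S *v v))^2 \<le> (u \<bullet> (S *v u)) * (v \<bullet> (S *v v))"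
proof -
  define a where "a = u \<bullet> (S *v u)"
  define b where "b = u \<bullet> (S *v v)"
  define c where "c = v \<bullet> (S *v v)"
  have q: "0 \<le> a + 2*t*b + t^2*c" for t
  proof -
    have "0 \<le> (u + t *\<^sub>R v) \<bullet> (S *v (u + t *\<^sub>R v))" using p psd_def by blast
    also have "\<dots> = a + t*b + t * (v \<bullet> (S *v u)) + t^2 * c"
      by (simp add: a_def b_def c_def matrix_vector_right_distrib matrix_vector_mult_scaleR
          inner_add_left inner_add_right algebra_simps power2_eq_square)
    also have "v \<bullet> (S *v u) = b" using sym_inner[OF sym] b_def by metis
    finally show ?thesis by (simp add: algebra_simps)
  qed
  have a0: "0 \<le> a" using p psd_def a_def by blast
  show ?thesis
  proof (cases "c = 0")
    case True
    show ?thesis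
    proof (cases "b = 0")
      case False
      have "0 \<le> a + 2*(-(a+1)/(2*b))*b + (-(a+1)/(2*b))^2*c" by (rule q)
      then have "0 \<le> a - (a+1)" using False True by (simp add: field_simps)
      then show ?thesis by simp
    qed (simp add: b_def[symmetric] a0 True c_def[symmetric] a_def[symmetric])
  next
    case False
    have c0: "0 < c" using False p psd_def c_def by (metis order_le_less)
    have "0 \<le> a + 2*(-b/c)*b + (-b/c)^2*c" by (rule q)
    then have "0 \<le> a - b^2/c" using c0 by (simp add: field_simps power2_eq_square)
    then have "b^2 \<le> a * c" using c0 by (simp add: field_simps)
    then show ?thesis by (simp add: a_def b_def c_def)
  qed
qed

lemma psd_ker:
  fixes R :: "real^'n^'n"
  assumes sym: "transpose R = R" and p: "psd R" and z: "w \<bullet> (R *v w) = 0"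
  shows "R *v w = 0"
proof -
  have "((R *v w) \<bullet> (R *v w))^2 \<le> ((R *v w) \<bullet> (R *v (R *v w))) * (w \<bullet> (R *v w))"
    by (rule psd_CS[OF sym p])
  then have "((R *v w) \<bullet> (R *v w))^2 \<le> 0" using z by simp
  then show ?thesis by simp
qed

lemma psd_bound:
  fixes S :: "real^'n^'n"
  assumes sym: "transpose S = S" and p: "psd S"
  shows "\<exists>K>0. \<forall>v. (norm (S *v v))^2 \<le> K * (v \<bullet> (S *v v))"
proof -
  obtain K where K: "\<And>x. norm (S *v x) \<le> norm x * K" and Kp: "K > 0"
    using bounded_linear.pos_bounded[OF matrix_vector_mul_bounded_linear] by blast
  have "(norm (S *v v))^2 \<le> K * (v \<bullet> (S *v v))" for v
  proof -
    define u where "u = S *v v"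
    have c0: "0 \<le> v \<bullet> (S *v v)" using p psd_def by blast
    have "(u \<bullet> (S *v v))^2 \<le> (u \<bullet> (S *v u)) * (v \<bullet> (S *v v))"
      by (rule psd_CS[OF sym p])
    moreover have "u \<bullet> (S *v v) = (norm u)^2" by (simp add: u_def power2_norm_eq_inner)
    moreover have "u \<bullet> (S *v u) \<le> K * (norm u)^2"
    proof -
      have "u \<bullet> (S *v u) \<le> norm u * norm (S *v u)" by (rule norm_cauchy_schwarz)
      also have "\<dots> \<le> norm u * (norm u * K)" by (rule mult_left_mono[OF K norm_ge_zero])
      finally show ?thesis by (simp add: power2_eq_square algebra_simps)
    qed
    ultimately have "((norm u)^2)^2 \<le> (K * (norm u)^2) * (v \<bullet> (S *v v))"
    proof -
      assume a1: "(u \<bullet> (S *v v))^2 \<le> (u \<bullet> (S *v u)) * (v \<bullet> (S *v v))"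
        and a2: "u \<bullet> (S *v v) = (norm u)^2" and a3: "u \<bullet> (S *v u) \<le> K * (norm u)^2"
      have "(u \<bullet> (S *v u)) * (v \<bullet> (S *v v)) \<le> (K * (norm u)^2) * (v \<bullet> (S *v v))"
        by (rule mult_right_mono[OF a3 c0])
      then show ?thesis using a1 a2 by simp
    qed
    then have h: "(norm u)^2 * (norm u)^2 \<le> (norm u)^2 * (K * (v \<bullet> (S *v v)))"
      by (simp add: power2_eq_square algebra_simps)
    show ?thesis
    proof (cases "norm u = 0")
      case True
      then show ?thesis using c0 Kp u_def by simp
    next
      case False
      then have "0 < (norm u)^2" by simp
      then have "(norm u)^2 \<le> K * (v \<bullet> (S *v v))"
        using h mult_le_cancel_left_pos by blast
      then show ?thesis using u_def by simp
    qed
  qed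
  then show ?thesis using Kp by blast
qed

lemma invertible_iff_ker:
  fixes Q :: "real^'n^'n"
  shows "invertible Q \<longleftrightarrow> (\<forall>x. Q *v x = 0 \<longrightarrow> x = 0)"
  by (metis invertible_def matrix_left_invertible_ker matrix_left_right_inverse)

lemma energy_mono:
  fixes E J R Q :: "real^'n^'n" and y y' :: "real \<Rightarrow> real^'n"
  assumes J: "J = - transpose J" and Rs: "R = transpose R" and Rp: "psd R"
    and sym: "transpose Q ** E = transpose E ** Q"
    and dy: "\<And>t. (y has_vector_derivative y' t) (at t)"
    and eq: "\<And>t. E *v y' t = ((J - R) ** Q) *v y t"
    and t0: "0 \<le> t"
  shows "y t \<bullet> ((transpose Q ** E) *v y t) \<le> y 0 \<bullet> ((transpose Q ** E) *v y 0)"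
proof -
  define S where "S = transpose Q ** E"
  have Ssym: "transpose S = S" using sym by (simp add: S_def matrix_transpose_mul)
  define f where "f s = y s \<bullet> (S *v y s)" for s
  have df: "(f has_real_derivative (y s \<bullet> (S *v y' s) + y' s \<bullet> (S *v y s))) (at s)" for s
  proof -
    have "((\<lambda>s. S *v y s) has_vector_derivative S *v y' s) (at s)"
      by (rule bounded_linear.has_vector_derivative[OF matrix_vector_mul_bounded_linear dy])
    from bounded_bilinear.has_vector_derivative[OF bounded_bilinear_inner dy this]
    show ?thesis unfolding f_def has_real_derivative_iff_has_vector_derivative by simp
  qed
  have val: "y s \<bullet> (S *v y' s) + y' s \<bullet> (S *v y s) \<le> 0" for s
  proof -
    have "y' s \<bullet> (S *v y s) = y s \<bullet> (S *v y' s)" by (rule sym_inner[OF Ssym])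
    moreover have "y s \<bullet> (S *v y' s) = (Q *v y s) \<bullet> (E *v y' s)"
    proof -
      have "S *v y' s = transpose Q *v (E *v y' s)" by (simp add: S_def matrix_vector_mul_assoc)
      then show ?thesis using inner_transpose[of "y s" "transpose Q"] by simp
    qed
    moreover have "E *v y' s = J *v (Q *v y s) - R *v (Q *v y s)"
      by (simp add: eq matrix_vector_mul_assoc[symmetric] matrix_vector_mult_diff_rdistrib)
    moreover have "(Q *v y s) \<bullet> (J *v (Q *v y s)) = 0" by (rule skew_zero[OF J])
    moreover have "0 \<le> (Q *v y s) \<bullet> (R *v (Q *v y s))" using Rp psd_def by blast
    ultimately show ?thesis by (simp add: inner_diff_right)
  qed
  have "f t \<le> f 0"
    by (rule DERIV_nonpos_imp_nonincreasing[OF t0]) (use df val in blast)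
  then show ?thesis by (simp add: f_def S_def)
qed

theorem proposition4:
  fixes E J R Q :: "real^'n^'n"
  assumes "J = - transpose J"
    and "R = transpose R" and "psd R"
    and "transpose Q ** E = transpose E ** Q" and "psd (transpose Q ** E)"
    and "mat_ker Q \<subseteq> mat_ker E"
  shows "(regular_pencil E Q \<longrightarrow> invertible Q)
    \<and> (invertible Q \<longrightarrow>
         (stable_DAE E ((J - R) ** Q) \<longleftrightarrow>
          mat_ker J \<inter> mat_ker R \<inter> ((*v) Q ` mat_ker E) = {0}))"
proof -
  note Jsk = assms(1) and Rs = assms(2) and Rp = assms(3) and sym = assms(4) and Sp0 = assms(5)
    and ker = assms(6)
  have Rs': "transpose R = R" using Rs by simp
  define S where "S = transpose Q ** E"
  have Ssym: "transpose S = S" using sym by (simp add: S_def matrix_transpose_mul)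
  have Sp: "psd S" using Sp0 S_def by simp
  define M where "M = (J - R) ** Q"
  define K where "K = mat_ker J \<inter> mat_ker R \<inter> ((*v) Q ` mat_ker E)"
  have K0: "0 \<in> K" unfolding K_def mat_ker_def by (auto intro!: image_eqI[where x=0])
  have A: "regular_pencil E Q \<longrightarrow> invertible Q"
  proof
    assume reg: "regular_pencil E Q"
    show "invertible Q"
    proof (rule ccontr)
      assume "\<not> invertible Q"
      then obtain v where v0: "v \<noteq> 0" and Qv: "Q *v v = 0" using invertible_iff_ker by blast
      have Ev: "E *v v = 0" using ker Qv unfolding mat_ker_def by blast
      have "det (s *\<^sub>R E - Q) = 0" for s
      proof -
        have "(s *\<^sub>R E - Q) *v v = 0"
          by (simp add: matrix_vector_mult_diff_rdistrib scaleR_matrix_vector_assoc[symmetric] Ev Qv)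
        then have "\<not> invertible (s *\<^sub>R E - Q)" using v0 invertible_iff_ker by blast
        then show ?thesis using invertible_det_nz by blast
      qed
      then show False using reg unfolding regular_pencil_def by auto
    qed
  qed
  have B: "invertible Q \<longrightarrow> (stable_DAE E M \<longleftrightarrow> K = {0})"
  proof
    assume Qi: "invertible Q"
    show "stable_DAE E M \<longleftrightarrow> K = {0}"
    proof
      assume st: "stable_DAE E M"
      show "K = {0}"
      proof (rule ccontr)
        assume "K \<noteq> {0}"
        then obtain w where wK: "w \<in> K" and w0: "w \<noteq> 0" using K0 by blast
        then obtain v where Jw: "J *v w = 0" and Rw: "R *v w = 0" and wv: "w = Q *v v"
          and Ev: "E *v v = 0"
          unfolding K_def mat_ker_def by auto
        have v0: "v \<noteq> 0" using w0 wv by auto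
        define x where "x t = t *\<^sub>R v" for t :: real
        define D where "D k = (if k = 0 then x else if k = 1 then (\<lambda>t. v) else (\<lambda>t. 0))"
          for k :: nat
        have sm: "smooth_fun x"
          unfolding smooth_fun_def
        proof (intro exI[of _ D] conjI allI)
          show "D 0 = x" by (simp add: D_def)
          fix k t
          show "(D k has_vector_derivative D (Suc k) t) (at t)"
          proof (cases "k = 0")
            case True
            have "((\<lambda>t. t *\<^sub>R v) has_vector_derivative v) (at t)"
              by (auto intro!: derivative_eq_intros)
            then show ?thesis using True unfolding D_def x_def by simp
          next
            case False
            then show ?thesis by (simp add: D_def)
          qed
        qed
        have Ex: "(\<lambda>t. E *v x t) = (\<lambda>t. 0)"
          by (simp add: x_def Ev matrix_vector_mult_scaleR)
        have Mx: "M *v x t = 0" for t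
          by (simp add: x_def M_def matrix_vector_mult_scaleR matrix_vector_mul_assoc[symmetric] wv[symmetric]
              matrix_vector_mult_diff_rdistrib Jw Rw)
        have "\<forall>t. ((\<lambda>t. E *v x t) has_vector_derivative (M *v x t)) (at t)"
          unfolding Ex Mx by simp
        then have "bounded (x ` {0..})" using st sm unfolding stable_DAE_def by blast
        then obtain a where a: "\<And>y. y \<in> x ` {0..} \<Longrightarrow> norm y \<le> a"
          unfolding bounded_iff by blast
        define t where "t = (\<bar>a\<bar> + 1) / norm v"
        have t0: "t \<ge> 0" by (simp add: t_def)
        have "norm (x t) = \<bar>a\<bar> + 1" using v0 t0 by (simp add: x_def t_def)
        moreover have "norm (x t) \<le> a" using a t0 by auto
        ultimately show False by simp
      qed
    next
      assume K1: "K = {0}"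
      show "stable_DAE E M"
        unfolding stable_DAE_def
      proof (intro allI impI)
        fix x :: "real \<Rightarrow> real^'n"
        assume sm: "smooth_fun x"
          and de: "\<forall>t. ((\<lambda>t. E *v x t) has_vector_derivative (M *v x t)) (at t)"
        obtain D where D0: "D 0 = x" and Dd: "\<And>k t. (D k has_vector_derivative D (Suc k) t) (at t)"
          using sm unfolding smooth_fun_def by blast
        have d0: "(x has_vector_derivative D 1 t) (at t)" for t using Dd[of 0 t] D0 by simp
        have d1: "(D 1 has_vector_derivative D 2 t) (at t)" for t
          using Dd[of 1 t] by (simp add: numeral_2_eq_2)
        have e0: "E *v D 1 t = M *v x t" for t
          using vector_derivative_unique_at[OF
              bounded_linear.has_vector_derivative[OF matrix_vector_mul_bounded_linear d0] de[rule_format]] .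
        have e1: "E *v D 2 t = M *v D 1 t" for t
        proof -
          have "((\<lambda>t. E *v D 1 t) has_vector_derivative E *v D 2 t) (at t)"
            by (rule bounded_linear.has_vector_derivative[OF matrix_vector_mul_bounded_linear d1])
          moreover have "(\<lambda>t. E *v D 1 t) = (\<lambda>t. M *v x t)" using e0 by auto
          ultimately have "((\<lambda>t. M *v x t) has_vector_derivative E *v D 2 t) (at t)" by simp
          from vector_derivative_unique_at[OF this
              bounded_linear.has_vector_derivative[OF matrix_vector_mul_bounded_linear d0]]
          show ?thesis .
        qed
        have V: "x t \<bullet> (S *v x t) \<le> x 0 \<bullet> (S *v x 0)" if "0 \<le> t" for t
          unfolding S_def
          by (rule energy_mono[OF Jsk Rs Rp sym d0 e0[unfolded M_def] that])
        have W: "D 1 t \<bullet> (S *v D 1 t) \<le> D 1 0 \<bullet> (S *v D 1 0)" if "0 \<le> t" for t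
          unfolding S_def
          by (rule energy_mono[OF Jsk Rs Rp sym d1 e1[unfolded M_def] that])
        obtain C where C0: "C > 0" and C: "\<And>v. (norm (S *v v))^2 \<le> C * (v \<bullet> (S *v v))"
          using psd_bound[OF Ssym Sp] by blast
        define f where "f z = (S *v z, (transpose Q ** M) *v z)" for z
        have blf: "bounded_linear f"
          unfolding f_def by (intro bounded_linear_Pair matrix_vector_mul_bounded_linear)
        have inj: "\<forall>z\<in>UNIV. f z = 0 \<longrightarrow> z = 0"
        proof (intro ballI impI)
          fix z assume "f z = 0"
          then have Sz: "S *v z = 0" and Tz: "transpose Q *v (M *v z) = 0"
            by (auto simp: f_def matrix_vector_mul_assoc zero_prod_def)
          have Mz: "M *v z = 0" using Tz transpose_invertible[OF Qi] invertible_iff_ker by blast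
          define w where "w = Q *v z"
          have JR: "J *v w - R *v w = 0"
            using Mz by (simp add: M_def w_def matrix_vector_mul_assoc[symmetric]
                matrix_vector_mult_diff_rdistrib)
          have "w \<bullet> (J *v w) = 0" by (rule skew_zero[OF Jsk])
          moreover have "w \<bullet> (J *v w - R *v w) = 0" using JR by simp
          ultimately have "w \<bullet> (R *v w) = 0" by (simp add: inner_diff_right)
          then have Rw: "R *v w = 0" by (rule psd_ker[OF Rs' Rp])
          then have Jw: "J *v w = 0" using JR by simp
          have "transpose Q *v (E *v z) = 0" using Sz by (simp add: S_def matrix_vector_mul_assoc)
          then have Ez: "E *v z = 0" using transpose_invertible[OF Qi] invertible_iff_ker by blast
          have "w \<in> K" unfolding K_def mat_ker_def using Rw Jw Ez w_def by auto
          then have "w = 0" using K1 by auto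
          then show "z = 0" using Qi invertible_iff_ker[of Q] w_def by metis
        qed
        obtain e where e0': "e > 0" and e: "\<And>z. e * norm z \<le> norm (f z)"
          using injective_imp_isometric[OF closed_UNIV subspace_UNIV blf inj] by blast
        define V0 where "V0 = x 0 \<bullet> (S *v x 0)"
        define W0 where "W0 = D 1 0 \<bullet> (S *v D 1 0)"
        have bnd: "norm (x t) \<le> (sqrt (C * V0) + sqrt (C * W0)) / e" if t0: "0 \<le> t" for t
        proof -
          have "(norm (S *v x t))^2 \<le> C * V0"
            using C[of "x t"] V[OF t0] C0 unfolding V0_def
            by (meson mult_left_mono order_trans less_imp_le)
          then have n1: "norm (S *v x t) \<le> sqrt (C * V0)" by (rule real_le_rsqrt)
          have "(norm (S *v D 1 t))^2 \<le> C * W0"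
            using C[of "D 1 t"] W[OF t0] C0 unfolding W0_def
            by (meson mult_left_mono order_trans less_imp_le)
          then have n2: "norm (S *v D 1 t) \<le> sqrt (C * W0)" by (rule real_le_rsqrt)
          have "(transpose Q ** M) *v x t = S *v D 1 t"
            unfolding S_def matrix_vector_mul_assoc[symmetric] e0[of t] by (rule refl)
          then have "norm (f (x t)) \<le> norm (S *v x t) + norm (S *v D 1 t)"
            unfolding f_def by (metis norm_Pair_le)
          then have "e * norm (x t) \<le> sqrt (C * V0) + sqrt (C * W0)"
            using e[of "x t"] n1 n2 by linarith
          then show ?thesis using e0' by (simp add: field_simps)
        qed
        show "bounded (x ` {0..})"
          unfolding bounded_iff using bnd by auto
      qed
    qed
  qed
  show ?thesis using A B unfolding M_def K_def by blast
qed

end
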